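(* Let $k\ge1$, $G=(V,E)$ an inductively $k$-independent graph with $k$-independence ordering $v_1,\dots,v_n$, and $w:V\to\mathbb{Z}_{\ge0}$ vertex weights (write $w_i=w(v_i)$). Let $y$ and $S_{\mathrm{out}}$ be produced by the algorithm PD-MWIS described in the context. Then $w(S_{\mathrm{out}})=\sum_{v\in S_{\mathrm{out}}}w(v)\ge\sum_{i=1}^n y_i$.
   Context: $N(v)$ is the neighbourhood of $v$ (excluding $v$); $G$ is inductively $k$-independent with $k$-independence ordering $v_1,\dots,v_n$ if for every $i$, $G[N(v_i)\cap\{v_i,\dots,v_n\}]$ has no independent set of size more than $k$. Let $A_j=N(v_j)\cap\{v_{j+1},\dots,v_n\}$. Algorithm PD-MWIS: Phase 1: start with an empty stack $S$; for $i=1,\dots,n$: set $y_i=\max\{0,\ w_i-\sum_{j<i,\ v_i\in A_j}y_j\}$, and if $y_i>0$ push $v_i$ onto $S$. Phase 2: with $S_{\mathrm{out}}=\emptyset$, pop the vertices of $S$ one at a time (reverse insertion order), adding a popped $v$ to $S_{\mathrm{out}}$ whenever $S_{\mathrm{out}}\cap N(v)=\emptyset$. Output $S_{\mathrm{out}}$. *)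

theory Defs
  imports Main
begin

text \<open>Graphs: vertex type 'a, edge relation E (symmetric, irreflexive), vertex set = set of the
ordering list vs = [v_1,...,v_n] (0-based positions: vs!i is v_(i+1)).\<close>

definition simple_graph_on :: "'a list \<Rightarrow> ('a \<Rightarrow> 'a \<Rightarrow> bool) \<Rightarrow> bool" where
  "simple_graph_on vs E \<longleftrightarrow> distinct vs \<and> (\<forall>u v. E u v \<longrightarrow> E v u) \<and> (\<forall>u. \<not> E u u)
     \<and> (\<forall>u v. E u v \<longrightarrow> u \<in> set vs \<and> v \<in> set vs)"

definition independent_set :: "('a \<Rightarrow> 'a \<Rightarrow> bool) \<Rightarrow> 'a set \<Rightarrow> bool" where
  "independent_set E I \<longleftrightarrow> (\<forall>u\<in>I. \<forall>v\<in>I. \<not> E u v)"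

definition k_independence_ordering :: "('a \<Rightarrow> 'a \<Rightarrow> bool) \<Rightarrow> 'a list \<Rightarrow> nat \<Rightarrow> bool" where
  "k_independence_ordering E vs k \<longleftrightarrow>
     (\<forall>i < length vs. \<forall>I. I \<subseteq> {u. E (vs!i) u} \<inter> set (drop i vs) \<and> independent_set E I
        \<longrightarrow> card I \<le> k)"

text \<open>Phase 1: the dual values y_1..y_i as a list (0-based). v_i \<in> A_j with j < i iff E v_j v_i.\<close>
fun pd_ys :: "('a \<Rightarrow> 'a \<Rightarrow> bool) \<Rightarrow> ('a \<Rightarrow> int) \<Rightarrow> 'a list \<Rightarrow> nat \<Rightarrow> int list" where
  "pd_ys E w vs 0 = []"
| "pd_ys E w vs (Suc i) =
     (let ys = pd_ys E w vs i
      in ys @ [max 0 (w (vs!i) - (\<Sum>j | j < i \<and> E (vs!j) (vs!i). ys!j))])"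

definition pd_y :: "('a \<Rightarrow> 'a \<Rightarrow> bool) \<Rightarrow> ('a \<Rightarrow> int) \<Rightarrow> 'a list \<Rightarrow> nat \<Rightarrow> int" where
  "pd_y E w vs i = pd_ys E w vs (Suc i) ! i"

text \<open>The stack S after phase 1, listed in insertion order (bottom to top).\<close>
definition pd_stack :: "('a \<Rightarrow> 'a \<Rightarrow> bool) \<Rightarrow> ('a \<Rightarrow> int) \<Rightarrow> 'a list \<Rightarrow> 'a list" where
  "pd_stack E w vs = map (\<lambda>i. vs!i) (filter (\<lambda>i. pd_y E w vs i > 0) [0..<length vs])"

definition pd_out :: "('a \<Rightarrow> 'a \<Rightarrow> bool) \<Rightarrow> ('a \<Rightarrow> int) \<Rightarrow> 'a list \<Rightarrow> 'a set" where
  "pd_out E w vs = foldl (\<lambda>S v. if S \<inter> {u. E v u} = {} then insert v S else S) {}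
                      (rev (pd_stack E w vs))"

end

theory Submission
  imports Defs
begin

lemma pd_ys_len: "length (pd_ys E w vs m) = m"
  by (induct m) (simp_all add: Let_def)

lemma pd_ys_nth: "i < m \<Longrightarrow> pd_ys E w vs m ! i = pd_y E w vs i"
proof (induct m)
  case 0 then show ?case by simp
next
  case (Suc m)
  show ?case
  proof (cases "i < m")
    case True
    then show ?thesis using Suc by (simp add: Let_def nth_append pd_ys_len)
  next
    case False
    then have "i = m" using Suc by simp
    then show ?thesis by (simp add: pd_y_def)
  qed
qed

lemma pd_y_eq: "pd_y E w vs i = max 0 (w (vs!i) - (\<Sum>j | j < i \<and> E (vs!j) (vs!i). pd_y E w vs j))"
proof -
  have "(\<Sum>j | j < i \<and> E (vs!j) (vs!i). pd_ys E w vs i ! j) = (\<Sum>j | j < i \<and> E (vs!j) (vs!i). pd_y E w vs j)"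
    by (rule sum.cong) (auto simp: pd_ys_nth)
  then show ?thesis
    by (simp add: pd_y_def Let_def nth_append pd_ys_len)
qed

lemma fold_inv:
  fixes E :: "'a \<Rightarrow> 'a \<Rightarrow> bool" and f
  assumes f_def: "f = (\<lambda>S v. if S \<inter> {u. E v u} = {} then insert v S else S)"
  shows "sorted_wrt (>) ps \<Longrightarrow>
    foldl f {} (map ((!) vs) ps) \<subseteq> (!) vs ` set ps \<and>
    (\<forall>j\<in>set ps. vs!j \<in> foldl f {} (map ((!) vs) ps) \<or>
       (\<exists>i\<in>set ps. j < i \<and> vs!i \<in> foldl f {} (map ((!) vs) ps) \<and> E (vs!j) (vs!i)))"
proof (induct ps rule: rev_induct)
  case Nil
  then show ?case by simp
next
  case (snoc x ps)
  define R where "R = foldl f {} (map ((!) vs) ps)"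
  have srt: "sorted_wrt (>) ps" and gt: "\<forall>i\<in>set ps. x < i"
    using snoc.prems by (auto simp: sorted_wrt_append)
  have IH: "R \<subseteq> (!) vs ` set ps"
    "\<forall>j\<in>set ps. vs!j \<in> R \<or> (\<exists>i\<in>set ps. j < i \<and> vs!i \<in> R \<and> E (vs!j) (vs!i))"
    using snoc.hyps[OF srt] by (simp_all add: R_def)
  have eq: "foldl f {} (map ((!) vs) (ps @ [x])) = f R (vs!x)" by (simp add: R_def)
  have mono: "R \<subseteq> f R (vs!x)" by (auto simp: f_def)
  have sub: "f R (vs!x) \<subseteq> (!) vs ` set (ps @ [x])" using IH(1) by (auto simp: f_def)
  have old: "\<forall>j\<in>set ps. vs!j \<in> f R (vs!x) \<or> (\<exists>i\<in>set (ps@[x]). j < i \<and> vs!i \<in> f R (vs!x) \<and> E (vs!j) (vs!i))"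
    using IH(2) mono by fastforce
  have new: "vs!x \<in> f R (vs!x) \<or> (\<exists>i\<in>set (ps@[x]). x < i \<and> vs!i \<in> f R (vs!x) \<and> E (vs!x) (vs!i))"
  proof (cases "R \<inter> {u. E (vs!x) u} = {}")
    case True then show ?thesis by (simp add: f_def)
  next
    case False
    then obtain u where u: "u \<in> R" "E (vs!x) u" by auto
    then obtain i where "i \<in> set ps" "u = vs!i" using IH(1) by auto
    then show ?thesis using u gt mono by auto
  qed
  show ?case unfolding eq using sub old new by auto
qed

theorem lemma11:
  fixes E :: "'a \<Rightarrow> 'a \<Rightarrow> bool" and vs :: "'a list" and w :: "'a \<Rightarrow> int" and k :: nat
  assumes "k \<ge> 1"
    and "simple_graph_on vs E"
    and "k_independence_ordering E vs k"
    and "\<forall>v \<in> set vs. w v \<ge> 0"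
  shows "(\<Sum>v \<in> pd_out E w vs. w v) \<ge> (\<Sum>i < length vs. pd_y E w vs i)"
proof -
  define n where "n = length vs"
  define y where "y = pd_y E w vs"
  have dist: "distinct vs" and irr: "\<And>u. \<not> E u u" using assms(2) by (auto simp: simple_graph_on_def)
  have ynn: "\<And>i. y i \<ge> 0" unfolding y_def by (subst pd_y_eq) simp
  define f where "f = (\<lambda>S v. if S \<inter> {u. E v u} = {} then insert v S else S)"
  define ps where "ps = rev (filter (\<lambda>i. y i > 0) [0..<n])"
  have out: "pd_out E w vs = foldl f {} (map ((!) vs) ps)"
    unfolding pd_out_def pd_stack_def f_def ps_def y_def n_def by (simp add: rev_map)
  have srt: "sorted_wrt (>) ps"
    unfolding ps_def by (simp add: sorted_wrt_rev sorted_wrt_filter)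
  have inv: "pd_out E w vs \<subseteq> (!) vs ` set ps"
     "\<forall>j\<in>set ps. vs!j \<in> pd_out E w vs \<or>
       (\<exists>i\<in>set ps. j < i \<and> vs!i \<in> pd_out E w vs \<and> E (vs!j) (vs!i))"
    using fold_inv[OF f_def srt, of vs] unfolding out by blast+
  define T where "T = {i. i < n \<and> vs!i \<in> pd_out E w vs}"
  have psT: "set ps = {i. i < n \<and> y i > 0}" unfolding ps_def by auto
  have outT: "pd_out E w vs = (!) vs ` T" using inv(1) unfolding T_def psT by auto
  have injT: "inj_on ((!) vs) T" using dist unfolding T_def n_def
    by (auto simp: inj_on_def nth_eq_iff_index_eq)
  have Tpos: "\<And>i. i \<in> T \<Longrightarrow> y i > 0 \<and> i < n" using inv(1) dist unfolding T_def psT n_def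
    by (auto simp: nth_eq_iff_index_eq)
  define C where "C i = insert i {j. j < i \<and> E (vs!j) (vs!i)}" for i
  have finC: "finite (C i)" for i
    by (rule finite_subset[of _ "{..i}"]) (auto simp: C_def)
  have finT: "finite T" unfolding T_def by simp
  have wi: "w (vs!i) = sum y (C i)" if "i \<in> T" for i
  proof -
    have "y i = max 0 (w (vs!i) - (\<Sum>j | j < i \<and> E (vs!j) (vs!i). y j))"
      unfolding y_def by (rule pd_y_eq)
    then have "w (vs!i) = y i + (\<Sum>j | j < i \<and> E (vs!j) (vs!i). y j)"
      using Tpos[OF that] by linarith
    then show ?thesis unfolding C_def by simp
  qed
  have "(\<Sum>v \<in> pd_out E w vs. w v) = (\<Sum>i\<in>T. w (vs!i))"
    unfolding outT by (rule sum.reindex[OF injT, unfolded comp_def])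
  also have "\<dots> = (\<Sum>i\<in>T. sum y (C i))" using wi by simp
  also have "\<dots> = sum (y \<circ> snd) (Sigma T C)"
    by (simp add: sum.Sigma[OF finT] finC split_def)
  also have "\<dots> \<ge> sum y (snd ` Sigma T C)"
    by (rule sum_image_le) (auto simp: finT finC ynn)
  finally have A: "sum y (snd ` Sigma T C) \<le> (\<Sum>v \<in> pd_out E w vs. w v)" .
  have cover: "{i. i < n \<and> y i > 0} \<subseteq> snd ` Sigma T C"
  proof
    fix j assume j: "j \<in> {i. i < n \<and> y i > 0}"
    then have "j \<in> set ps" using psT by simp
    then have "vs!j \<in> pd_out E w vs \<or> (\<exists>i\<in>set ps. j < i \<and> vs!i \<in> pd_out E w vs \<and> E (vs!j) (vs!i))"
      using inv(2) by blast
    then show "j \<in> snd ` Sigma T C"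
    proof
      assume "vs!j \<in> pd_out E w vs"
      then have "j \<in> T" using j T_def by simp
      then have "(j, j) \<in> Sigma T C" by (simp add: C_def)
      then show ?thesis by force
    next
      assume "\<exists>i\<in>set ps. j < i \<and> vs!i \<in> pd_out E w vs \<and> E (vs!j) (vs!i)"
      then obtain i where "i \<in> set ps" "j < i" "vs!i \<in> pd_out E w vs" "E (vs!j) (vs!i)" by blast
      then have "(i, j) \<in> Sigma T C" using psT by (auto simp: T_def C_def)
      then show ?thesis by force
    qed
  qed
  have finS: "finite (snd ` Sigma T C)" using finT finC by simp
  have "(\<Sum>i < n. y i) = sum y {i. i < n \<and> y i > 0}"
    by (rule sum.mono_neutral_right) (use ynn in \<open>auto simp: order.order_iff_strict\<close>)
  also have "\<dots> \<le> sum y (snd ` Sigma T C)"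
    by (rule sum_mono2[OF finS cover]) (simp add: ynn)
  finally show ?thesis using A unfolding y_def n_def by simp
qed

end
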